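(* For $n\in\{2,3\}$ let $N$ be the $n\times n$ matrix with $N_{i,i+1}=1$ and all other entries zero, and let $N^*=N^T$. For every integer $d\ge1$, the kernel of $\mathrm{ad}_{N^*}$ acting on $F^2_d$ (for $n=2$) has dimension $2$, and the kernel of $\mathrm{ad}_{N^*}$ acting on $F^3_d$ (for $n=3$) has dimension $\lceil 3d/2+1\rceil$.
   Context: $F^n_d$ is the space of vector fields $h:\mathbb{R}^n\to\mathbb{R}^n$ whose components are real homogeneous polynomials of degree $d$. For a matrix $A$, $\mathrm{ad}_A h(\xi)=Dh(\xi)A\xi-Ah(\xi)$ (the Lie bracket $[A\xi,h]$). *)

theory Defs
  imports "HOL-Analysis.Analysis" "HOL-Library.Function_Algebras"
begin

text \<open>Pointwise scalar multiplication on vector fields; together with the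
pointwise addition from Function_Algebras this makes functions into a real
vector space (used via the locale vector_space).\<close>
definition fscale :: "real \<Rightarrow> ('a \<Rightarrow> 'b::real_vector) \<Rightarrow> 'a \<Rightarrow> 'b" where
  "fscale c f = (\<lambda>x. c *\<^sub>R f x)"

definition hom_poly :: "nat \<Rightarrow> (real^'n \<Rightarrow> real) \<Rightarrow> bool" where
  "hom_poly d p \<longleftrightarrow> (\<exists>c :: ('n \<Rightarrow> nat) \<Rightarrow> real.
      p = (\<lambda>x. \<Sum>\<alpha>\<in>{\<alpha>. (\<Sum>i\<in>UNIV. \<alpha> i) = d}. c \<alpha> * (\<Prod>i\<in>UNIV. (x $ i) ^ \<alpha> i)))"

definition Fhom :: "nat \<Rightarrow> (real^'n \<Rightarrow> real^'n) set" where
  "Fhom d = {h. \<forall>j. hom_poly d (\<lambda>x. h x $ j)}"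

definition ad :: "real^'n^'n \<Rightarrow> (real^'n \<Rightarrow> real^'n) \<Rightarrow> real^'n \<Rightarrow> real^'n" where
  "ad A h = (\<lambda>\<xi>. frechet_derivative h (at \<xi>) (A *v \<xi>) - A *v h \<xi>)"

definition ad_kernel :: "real^'n^'n \<Rightarrow> nat \<Rightarrow> (real^'n \<Rightarrow> real^'n) set" where
  "ad_kernel A d = {h \<in> Fhom d. ad A h = (\<lambda>_. 0)}"

definition N2 :: "real^2^2" where
  "N2 = (\<chi> i j. if i = 1 \<and> j = 2 then 1 else 0)"

definition N3 :: "real^3^3" where
  "N3 = (\<chi> i j. if (i = 1 \<and> j = 2) \<or> (i = 2 \<and> j = 3) then 1 else 0)"

end

theory Submission
  imports Defs "HOL-Computational_Algebra.Polynomial"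
begin


lemma vs_fscale: "vector_space (fscale :: real \<Rightarrow> ('a \<Rightarrow> 'b::real_vector) \<Rightarrow> 'a \<Rightarrow> 'b)"
  by unfold_locales (auto simp: fscale_def fun_eq_iff algebra_simps)

lemma (in vector_space) dim_by_coords:
  fixes b :: "'i \<Rightarrow> 'b" and L :: "'b \<Rightarrow> 'i \<Rightarrow> 'a" and c :: "'i \<Rightarrow> 'a"
  assumes V: "subspace V" and I: "finite I"
    and bV: "\<And>i. i \<in> I \<Longrightarrow> b i \<in> V"
    and Ladd: "\<And>x y i. x \<in> V \<Longrightarrow> y \<in> V \<Longrightarrow> L (x + y) i = L x i + L y i"
    and Lscale: "\<And>x r i. x \<in> V \<Longrightarrow> L (r *s x) i = r * L x i"
    and Lb: "\<And>i j. i \<in> I \<Longrightarrow> j \<in> I \<Longrightarrow> L (b j) i = (if i = j then c i else 0)"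
    and c: "\<And>i. i \<in> I \<Longrightarrow> c i \<noteq> 0"
    and inj: "\<And>x. x \<in> V \<Longrightarrow> (\<forall>i\<in>I. L x i = 0) \<Longrightarrow> x = 0"
  shows "dim V = card I"
proof -
  have L0: "L 0 i = 0" for i
    using Lscale[OF subspace_0[OF V], of 0 i] by simp
  have Lsum: "L (\<Sum>j\<in>J. f j) i = (\<Sum>j\<in>J. L (f j) i)" if "finite J" "\<And>j. j \<in> J \<Longrightarrow> f j \<in> V" for J f i
    using that
  proof (induction J rule: finite_induct)
    case empty then show ?case by (simp add: L0)
  next
    case (insert x F)
    have "sum f F \<in> V" using insert by (intro subspace_sum[OF V]) auto
    then show ?case using insert by (simp add: Ladd)
  qed
  have Lcomb: "L (\<Sum>j\<in>I. u j *s b j) i = u i * c i" if "i \<in> I" for u i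
  proof -
    have "L (\<Sum>j\<in>I. u j *s b j) i = (\<Sum>j\<in>I. L (u j *s b j) i)"
      using bV by (intro Lsum I) (auto intro: subspace_scale[OF V])
    also have "\<dots> = (\<Sum>j\<in>I. u j * (if i = j then c i else 0))"
      using bV Lb that by (intro sum.cong) (auto simp: Lscale)
    also have "\<dots> = u i * c i" using that I by (simp add: if_distrib cong: if_cong)
    finally show ?thesis .
  qed
  have injb: "inj_on b I"
  proof
    fix i j assume ij: "i \<in> I" "j \<in> I" "b i = b j"
    show "i = j"
    proof (rule ccontr)
      assume "i \<noteq> j"
      then have "L (b j) i = 0" using Lb ij by auto
      moreover have "L (b i) i = c i" using Lb[OF ij(1) ij(1)] by simp
      ultimately show False using c ij by auto
    qed
  qed
  show ?thesis
  proof (rule dim_unique[of "b ` I"])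
    show "b ` I \<subseteq> V" using bV by auto
    show "card (b ` I) = card I" using injb by (rule card_image)
    show "independent (b ` I)"
    proof
      assume "dependent (b ` I)"
      then obtain u where u: "\<exists>v\<in>b ` I. u v \<noteq> 0" "(\<Sum>v\<in>b ` I. u v *s v) = 0"
        using dependent_finite[of "b ` I"] I by auto
      have "(\<Sum>j\<in>I. u (b j) *s b j) = 0"
        using u(2) by (simp add: sum.reindex[OF injb])
      then have "u (b i) * c i = 0" if "i \<in> I" for i
        using Lcomb[OF that, of "\<lambda>j. u (b j)"] L0 by simp
      then show False using u(1) c by auto
    qed
    show "V \<subseteq> span (b ` I)"
    proof
      fix x assume x: "x \<in> V"
      define s where "s = (\<Sum>j\<in>I. (L x j / c j) *s b j)"
      have sV: "s \<in> V" unfolding s_def using bV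
        by (intro subspace_sum[OF V] subspace_scale[OF V]) auto
      have "x - s = x + (-1) *s s" by simp
      have y: "x - s \<in> V" using x sV by (rule subspace_diff[OF V])
      have "L (x - s) i = 0" if "i \<in> I" for i
      proof -
        have "L (x - s) i = L (x + (-1) *s s) i" by simp
        also have "\<dots> = L x i + L ((-1) *s s) i"
          by (rule Ladd[OF x subspace_scale[OF V sV]])
        also have "\<dots> = L x i - L s i" using Lscale[OF sV, of "-1" i] by (simp del: scale_minus_left)
        also have "L s i = L x i" unfolding s_def using Lcomb[OF that] c[OF that] by simp
        finally show ?thesis by simp
      qed
      then have "x - s = 0" using inj[OF y] by auto
      then have "x = s" by simp
      moreover have "s \<in> span (b ` I)" unfolding s_def
        by (intro span_sum span_scale span_base) auto
      ultimately show "x \<in> span (b ` I)" by simp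
    qed
  qed
qed


definition MI :: "nat \<Rightarrow> ('n::finite \<Rightarrow> nat) set" where
  "MI d = {\<alpha>. (\<Sum>i\<in>UNIV. \<alpha> i) = d}"

definition mnm :: "('n::finite \<Rightarrow> nat) \<Rightarrow> real^'n \<Rightarrow> real" where
  "mnm \<alpha> x = (\<Prod>i\<in>UNIV. (x $ i) ^ \<alpha> i)"

lemma hom_poly_iff: "hom_poly d p \<longleftrightarrow> (\<exists>c. p = (\<lambda>x. \<Sum>\<alpha>\<in>MI d. c \<alpha> * mnm \<alpha> x))"
  unfolding hom_poly_def MI_def mnm_def ..

lemma finite_MI: "finite (MI d :: ('n::finite \<Rightarrow> nat) set)"
proof -
  have "MI d \<subseteq> {f. \<forall>x. (x \<in> (UNIV::'n set) \<longrightarrow> f x \<in> {..d}) \<and> (x \<notin> UNIV \<longrightarrow> f x = 0)}"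
    unfolding MI_def by (auto intro!: member_le_sum[where A=UNIV, simplified])
  then show ?thesis by (rule finite_subset) (intro finite_set_of_finite_funs; simp)
qed

lemma hom_poly_add: "hom_poly d p \<Longrightarrow> hom_poly d q \<Longrightarrow> hom_poly d (\<lambda>x. p x + q x)"
proof -
  assume "hom_poly d p" "hom_poly d q"
  then obtain c c' where "p = (\<lambda>x. \<Sum>\<alpha>\<in>MI d. c \<alpha> * mnm \<alpha> x)" "q = (\<lambda>x. \<Sum>\<alpha>\<in>MI d. c' \<alpha> * mnm \<alpha> x)"
    unfolding hom_poly_iff by blast
  then show ?thesis unfolding hom_poly_iff
    by (intro exI[of _ "\<lambda>\<alpha>. c \<alpha> + c' \<alpha>"]) (simp add: distrib_right sum.distrib)
qed

lemma hom_poly_scale: "hom_poly d p \<Longrightarrow> hom_poly d (\<lambda>x. r * p x)"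
proof -
  assume "hom_poly d p"
  then obtain c where "p = (\<lambda>x. \<Sum>\<alpha>\<in>MI d. c \<alpha> * mnm \<alpha> x)"
    unfolding hom_poly_iff by blast
  then show ?thesis unfolding hom_poly_iff
    by (intro exI[of _ "\<lambda>\<alpha>. r * c \<alpha>"]) (simp add: sum_distrib_left mult.assoc)
qed

lemma hom_poly_zero: "hom_poly d (\<lambda>x. 0)"
  unfolding hom_poly_iff by (auto intro!: exI[of _ "\<lambda>\<alpha>. 0"])

lemma hom_poly_diff: "hom_poly d p \<Longrightarrow> hom_poly d q \<Longrightarrow> hom_poly d (\<lambda>x. p x - q x)"
  using hom_poly_add[of d p "\<lambda>x. (-1) * q x"] hom_poly_scale[of d q "-1"] by simp

lemma MI_0: "MI 0 = {\<lambda>_. 0}"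
  unfolding MI_def by auto

lemma hom_poly_const: "hom_poly 0 (\<lambda>x. r)"
  unfolding hom_poly_iff MI_0 by (auto intro!: exI[of _ "\<lambda>\<alpha>. r"] simp: mnm_def)

lemma hom_poly_coord: "hom_poly 1 (\<lambda>x. x $ j)"
proof -
  define \<delta> where "\<delta> = (\<lambda>i. if i = j then 1 else 0::nat)"
  have d: "\<delta> \<in> MI 1" unfolding MI_def \<delta>_def by simp
  have m: "mnm \<delta> x = x $ j" for x
  proof -
    have "mnm \<delta> x = (\<Prod>i\<in>UNIV. if i = j then x $ i else 1)"
      unfolding mnm_def \<delta>_def by (intro prod.cong) auto
    then show ?thesis by simp
  qed
  have "(\<Sum>\<alpha>\<in>MI 1. (if \<alpha> = \<delta> then 1 else 0) * mnm \<alpha> x) = x $ j" for x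
  proof -
    have "(\<Sum>\<alpha>\<in>MI 1. (if \<alpha> = \<delta> then 1 else 0) * mnm \<alpha> x) = (\<Sum>\<alpha>\<in>MI 1. if \<alpha> = \<delta> then mnm \<alpha> x else 0)"
      by (intro sum.cong) auto
    also have "\<dots> = x $ j" using d by (subst sum.delta[OF finite_MI]) (simp add: m)
    finally show ?thesis .
  qed
  then show ?thesis unfolding hom_poly_iff
    by (intro exI[of _ "\<lambda>\<alpha>. if \<alpha> = \<delta> then 1 else 0"]) simp
qed

lemma mnm_add: "mnm (\<alpha> + \<beta>) x = mnm \<alpha> x * mnm \<beta> x"
  unfolding mnm_def by (simp add: power_add prod.distrib)

lemma hom_poly_mult:
  fixes p q :: "real^'n \<Rightarrow> real"
  assumes "hom_poly a p" "hom_poly b q"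
  shows "hom_poly (a + b) (\<lambda>x. p x * q x)"
proof -
  obtain c c' where p: "p = (\<lambda>x. \<Sum>\<alpha>\<in>MI a. c \<alpha> * mnm \<alpha> x)" and q: "q = (\<lambda>x. \<Sum>\<alpha>\<in>MI b. c' \<alpha> * mnm \<alpha> x)"
    using assms unfolding hom_poly_iff by blast
  define S where "S = (MI a :: ('n \<Rightarrow> nat) set) \<times> (MI b :: ('n \<Rightarrow> nat) set)"
  define C where "C = (\<lambda>\<gamma>. \<Sum>ab\<in>{ab\<in>S. fst ab + snd ab = \<gamma>}. c (fst ab) * c' (snd ab))"
  have fS: "finite S" unfolding S_def by (simp add: finite_MI)
  have img: "(\<lambda>ab. fst ab + snd ab) ` S \<subseteq> MI (a + b)"
    unfolding S_def MI_def by (auto simp: sum.distrib)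
  have "p x * q x = (\<Sum>\<gamma>\<in>MI (a + b). C \<gamma> * mnm \<gamma> x)" for x
  proof -
    have "p x * q x = (\<Sum>ab\<in>S. c (fst ab) * c' (snd ab) * mnm (fst ab + snd ab) x)"
      unfolding p q S_def sum_product sum.cartesian_product
      by (intro sum.cong) (auto simp: mnm_add)
    also have "\<dots> = (\<Sum>\<gamma>\<in>MI (a + b). \<Sum>ab\<in>{ab\<in>S. fst ab + snd ab = \<gamma>}. c (fst ab) * c' (snd ab) * mnm (fst ab + snd ab) x)"
      by (rule sum.group[symmetric, OF fS finite_MI img])
    also have "\<dots> = (\<Sum>\<gamma>\<in>MI (a + b). C \<gamma> * mnm \<gamma> x)"
      unfolding C_def sum_distrib_right by (intro sum.cong refl) auto
    finally show ?thesis .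
  qed
  then show ?thesis unfolding hom_poly_iff by blast
qed

lemma hom_poly_power: "hom_poly d p \<Longrightarrow> hom_poly (k * d) (\<lambda>x. p x ^ k)"
proof (induction k)
  case 0 then show ?case using hom_poly_const[of 1] by simp
next
  case (Suc k)
  then show ?case using hom_poly_mult[OF Suc.prems Suc.IH] by (simp add: add.commute)
qed

lemma mnm_scale: "mnm \<alpha> (r *\<^sub>R x) = r ^ (\<Sum>i\<in>UNIV. \<alpha> i) * mnm \<alpha> x"
  unfolding mnm_def by (simp add: power_mult_distrib prod.distrib power_sum)

lemma hom_poly_homog: "hom_poly d p \<Longrightarrow> p (r *\<^sub>R x) = r ^ d * p x"
proof -
  assume "hom_poly d p"
  then obtain c where p: "p = (\<lambda>x. \<Sum>\<alpha>\<in>MI d. c \<alpha> * mnm \<alpha> x)" unfolding hom_poly_iff by blast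
  have "p (r *\<^sub>R x) = (\<Sum>\<alpha>\<in>MI d. r ^ d * (c \<alpha> * mnm \<alpha> x))"
    unfolding p by (intro sum.cong refl) (simp add: mnm_scale MI_def)
  then show ?thesis by (simp add: p sum_distrib_left)
qed

lemma hom_poly_line: "hom_poly d p \<Longrightarrow> \<exists>P. \<forall>s. p (u + s *\<^sub>R v) = poly P s"
proof -
  assume "hom_poly d p"
  then obtain c where p: "p = (\<lambda>x. \<Sum>\<alpha>\<in>MI d. c \<alpha> * mnm \<alpha> x)" unfolding hom_poly_iff by blast
  show ?thesis
    by (rule exI[of _ "\<Sum>\<alpha>\<in>MI d. smult (c \<alpha>) (\<Prod>i\<in>UNIV. [:u $ i, v $ i:] ^ \<alpha> i)"])
      (simp add: p mnm_def poly_sum poly_prod poly_power)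
qed


lemma mnm_differentiable:
  fixes \<alpha> :: "'n::finite \<Rightarrow> nat"
  shows "mnm \<alpha> differentiable (at x within S)"
proof -
  have c: "(\<lambda>x. (x $ i) ^ \<alpha> i) differentiable (at x within S)" for i :: 'n
    by (intro differentiable_power bounded_linear_imp_differentiable bounded_linear_vec_nth)
  then obtain D where D: "((\<lambda>x. (x $ i) ^ \<alpha> i) has_derivative D i) (at x within S)" for i :: 'n
    unfolding differentiable_def by metis
  show ?thesis unfolding mnm_def differentiable_def
    by (rule exI, rule has_derivative_prod[of UNIV "\<lambda>i x. (x $ i) ^ \<alpha> i" D], rule D)
qed

lemma hom_poly_differentiable:
  fixes p :: "real^'n \<Rightarrow> real"
  assumes "hom_poly d p" shows "p differentiable (at x within S)"
proof -
  obtain c where p: "p = (\<lambda>x. \<Sum>\<alpha>\<in>MI d. c \<alpha> * mnm \<alpha> x)" using assms unfolding hom_poly_iff by blast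
  show ?thesis unfolding p
    by (intro differentiable_sum finite_MI ballI differentiable_mult differentiable_const mnm_differentiable)
qed

lemma hom_poly_continuous:
  fixes p :: "real^'n \<Rightarrow> real"
  assumes "hom_poly d p" shows "continuous_on S p"
  using hom_poly_differentiable[OF assms] differentiable_imp_continuous_within continuous_on_eq_continuous_within by blast

lemma hom_poly_vanish:
  fixes p :: "real^'n \<Rightarrow> real"
  assumes "hom_poly d p" "\<And>x. x $ k \<noteq> 0 \<Longrightarrow> p x = 0"
  shows "p x = 0"
proof -
  obtain P where P: "\<And>s. p (x + s *\<^sub>R axis k 1) = poly P s"
    using hom_poly_line[OF assms(1)] by blast
  have "P = 0"
  proof (rule ccontr)
    assume "P \<noteq> 0"
    then have f: "finite {s. poly P s = 0}" by (rule poly_roots_finite)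
    have "UNIV - {- (x $ k)} \<subseteq> {s. poly P s = 0}"
    proof
      fix s assume "s \<in> UNIV - {- (x $ k)}"
      then have "(x + s *\<^sub>R axis k 1) $ k \<noteq> 0" by (auto simp: axis_def)
      then show "s \<in> {s. poly P s = 0}" using assms(2) P by (metis mem_Collect_eq)
    qed
    then have "finite (UNIV - {- (x $ k)} :: real set)" using f finite_subset by blast
    then show False using infinite_UNIV_char_0[where 'a=real] by simp
  qed
  then show ?thesis using P[of 0] by simp
qed


interpretation FS: vector_space "fscale :: real \<Rightarrow> (real^'n \<Rightarrow> real^'n) \<Rightarrow> _"
  by (rule vs_fscale)

lemma fscale_apply: "fscale r h x = r *\<^sub>R h x" by (simp add: fscale_def)

lemma Fhom_subspace: "FS.subspace (Fhom d)"
  unfolding FS.subspace_def Fhom_def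
  by (auto intro: hom_poly_zero hom_poly_add hom_poly_scale simp: fscale_apply)

lemma Fhom_differentiable:
  assumes "h \<in> Fhom d" shows "h differentiable (at x)"
proof -
  have "(\<lambda>x. h x \<bullet> i) differentiable (at x)" if "i \<in> Basis" for i
  proof -
    obtain j where "i = axis j 1" using \<open>i \<in> Basis\<close> by (auto simp: Basis_vec_def)
    then have "(\<lambda>x. h x \<bullet> i) = (\<lambda>x. h x $ j)" by (simp add: cart_eq_inner_axis)
    moreover have "hom_poly d (\<lambda>x. h x $ j)" using assms unfolding Fhom_def by blast
    ultimately show ?thesis using hom_poly_differentiable by metis
  qed
  then show ?thesis using differentiable_componentwise_within[of h x UNIV] by simp
qed

lemma Fhom_hom: "h \<in> Fhom d \<Longrightarrow> h (r *\<^sub>R x) = r ^ d *\<^sub>R h x"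
proof -
  assume "h \<in> Fhom d"
  then have "hom_poly d (\<lambda>x. h x $ i)" for i unfolding Fhom_def by blast
  from hom_poly_homog[OF this] show ?thesis by (simp add: vec_eq_iff)
qed

lemma Fhom_vanish:
  assumes "h \<in> Fhom d" "\<And>x. x $ k \<noteq> 0 \<Longrightarrow> h x = 0" shows "h x = 0"
  using assms hom_poly_vanish[of d "\<lambda>x. h x $ j" k x for j] unfolding Fhom_def
  by (simp add: vec_eq_iff)

definition Ev :: "real^'n^'n \<Rightarrow> real \<Rightarrow> real^'n \<Rightarrow> real^'n" where
  "Ev A t \<xi> = \<xi> + t *\<^sub>R (A *v \<xi>) + (t^2/2) *\<^sub>R (A *v (A *v \<xi>))"

lemma Ev_0: "Ev A 0 \<xi> = \<xi>" by (simp add: Ev_def)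

lemma Ev_add: "Ev A t (x + y) = Ev A t x + Ev A t y"
  by (simp add: Ev_def algebra_simps)

lemma Ev_scale: "Ev A t (c *\<^sub>R x) = c *\<^sub>R Ev A t x"
  by (simp add: Ev_def algebra_simps)

lemma Ev_zero: "Ev A t 0 = 0"
  by (simp add: Ev_def)

lemma Ev_comm: "A *v Ev A t \<xi> = Ev A t (A *v \<xi>)"
  by (simp add: Ev_def algebra_simps)

lemma Ev_inv:
  assumes A3: "\<And>v. A *v (A *v (A *v v)) = 0"
  shows "Ev A (-t) (Ev A t \<xi>) = \<xi>"
proof -
  have Ay: "A *v Ev A t \<xi> = A *v \<xi> + t *\<^sub>R (A *v (A *v \<xi>))"
    using A3 by (simp add: Ev_def algebra_simps)
  have AAy: "A *v (A *v \<xi> + t *\<^sub>R (A *v (A *v \<xi>))) = A *v (A *v \<xi>)"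
    using A3 by (simp add: algebra_simps)
  have "Ev A (-t) (Ev A t \<xi>) = Ev A t \<xi> + (-t) *\<^sub>R (A *v \<xi> + t *\<^sub>R (A *v (A *v \<xi>)))
      + ((-t)^2/2) *\<^sub>R (A *v (A *v \<xi>))"
    unfolding Ev_def[of A "-t"] Ay AAy ..
  also have "\<dots> = \<xi>"
    by (simp add: Ev_def vec_eq_iff field_simps power2_eq_square)
  finally show ?thesis .
qed

lemma Ev_deriv:
  assumes A3: "\<And>v. A *v (A *v (A *v v)) = 0"
  shows "((\<lambda>t. Ev A t \<xi>) has_vector_derivative (A *v Ev A t \<xi>)) (at t)"
proof -
  have "((\<lambda>t. \<xi> + t *\<^sub>R (A *v \<xi>) + (t^2/2) *\<^sub>R (A *v (A *v \<xi>))) has_vector_derivative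
      (0 + (1 *\<^sub>R (A *v \<xi>)) + (t *\<^sub>R (A *v (A *v \<xi>))))) (at t)"
    by (intro derivative_eq_intros has_vector_derivative_scaleR) (auto intro!: derivative_eq_intros)
  moreover have "A *v Ev A t \<xi> = A *v \<xi> + t *\<^sub>R (A *v (A *v \<xi>))"
    using A3[of \<xi>] by (simp add: Ev_def algebra_simps)
  ultimately show ?thesis unfolding Ev_def by simp
qed

lemma Ev_inv':
  assumes A3: "\<And>v. A *v (A *v (A *v v)) = 0"
  shows "Ev A t (Ev A (-t) \<xi>) = \<xi>"
  using Ev_inv[OF A3, of "-t" \<xi>] by simp

lemma chain_vd:
  assumes "(\<gamma> has_vector_derivative v) (at t)" "(h has_derivative F) (at (\<gamma> t))"
  shows "((\<lambda>s. h (\<gamma> s)) has_vector_derivative F v) (at t)"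
proof -
  have "((h \<circ> \<gamma>) has_derivative (F \<circ> (\<lambda>s. s *\<^sub>R v))) (at t)"
    using diff_chain_at[OF assms(1)[unfolded has_vector_derivative_def] assms(2)] .
  moreover have "F \<circ> (\<lambda>s. s *\<^sub>R v) = (\<lambda>s. s *\<^sub>R F v)"
    using linear.scaleR[OF bounded_linear.linear[OF has_derivative_bounded_linear[OF assms(2)]]]
    by (auto simp: o_def)
  ultimately show ?thesis unfolding has_vector_derivative_def o_def by simp
qed

lemma ad_zero_iff:
  fixes A :: "real^'n^'n" and h :: "real^'n \<Rightarrow> real^'n"
  assumes A3: "\<And>v. A *v (A *v (A *v v)) = 0" and dh: "\<And>x. h differentiable (at x)"
  shows "ad A h = (\<lambda>_. 0) \<longleftrightarrow> (\<forall>t \<xi>. h (Ev A t \<xi>) = Ev A t (h \<xi>))"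
proof
  assume eq: "\<forall>t \<xi>. h (Ev A t \<xi>) = Ev A t (h \<xi>)"
  show "ad A h = (\<lambda>_. 0)"
  proof
    fix \<xi>
    let ?F = "frechet_derivative h (at \<xi>)"
    have hF: "(h has_derivative ?F) (at (Ev A 0 \<xi>))"
      using dh[of \<xi>] unfolding Ev_0 frechet_derivative_works .
    have d1: "((\<lambda>t. h (Ev A t \<xi>)) has_vector_derivative ?F (A *v \<xi>)) (at 0)"
      using chain_vd[OF Ev_deriv[OF A3, of \<xi> 0] hF] by (simp add: Ev_0)
    have d2: "((\<lambda>t. Ev A t (h \<xi>)) has_vector_derivative (A *v h \<xi>)) (at 0)"
      using Ev_deriv[OF A3, of "h \<xi>" 0] by (simp add: Ev_0)
    have "(\<lambda>t. h (Ev A t \<xi>)) = (\<lambda>t. Ev A t (h \<xi>))" using eq by auto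
    then have "?F (A *v \<xi>) = A *v h \<xi>" using d1 d2 vector_derivative_unique_at by metis
    then show "ad A h \<xi> = 0" by (simp add: ad_def)
  qed
next
  assume ad0: "ad A h = (\<lambda>_. 0)"
  have key: "frechet_derivative h (at x) (A *v x) = A *v h x" for x
    using fun_cong[OF ad0, of x] by (simp add: ad_def)
  show "\<forall>t \<xi>. h (Ev A t \<xi>) = Ev A t (h \<xi>)"
  proof (intro allI)
    fix t \<xi>
    define w where "w = (\<lambda>s. h (Ev A s \<xi>))"
    have dw: "(w has_vector_derivative (A *v w s)) (at s)" for s
    proof -
      have "(h has_derivative frechet_derivative h (at (Ev A s \<xi>))) (at (Ev A s \<xi>))"
        using dh frechet_derivative_works by blast
      from chain_vd[OF Ev_deriv[OF A3, of \<xi> s] this]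
      show ?thesis unfolding w_def key .
    qed
    have dAw: "((\<lambda>s. A *v w s) has_vector_derivative A *v (A *v w s)) (at s)" for s
      by (rule bounded_linear.has_vector_derivative[OF matrix_vector_mul_bounded_linear[of A] dw])
    have dAAw: "((\<lambda>s. A *v (A *v w s)) has_vector_derivative 0) (at s)" for s
      using bounded_linear.has_vector_derivative[OF matrix_vector_mul_bounded_linear[of A] dAw[of s]] A3
      by simp
    define g where "g = (\<lambda>s. Ev A (-s) (w s))"
    have dg: "(g has_vector_derivative 0) (at s)" for s
    proof -
      have d1: "((\<lambda>s. (-s) *\<^sub>R (A *v w s)) has_vector_derivative ((-s) *\<^sub>R (A *v (A *v w s)) + (-1) *\<^sub>R (A *v w s))) (at s)"
        by (rule has_vector_derivative_scaleR[OF _ dAw]) (auto intro!: derivative_eq_intros)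
      have d2: "((\<lambda>s. ((-s)^2/2) *\<^sub>R (A *v (A *v w s))) has_vector_derivative (((-s)^2/2) *\<^sub>R 0 + s *\<^sub>R (A *v (A *v w s)))) (at s)"
        by (rule has_vector_derivative_scaleR[OF _ dAAw]) (auto intro!: derivative_eq_intros)
      have "((\<lambda>s. w s + (-s) *\<^sub>R (A *v w s) + ((-s)^2/2) *\<^sub>R (A *v (A *v w s))) has_vector_derivative
         (A *v w s + ((-s) *\<^sub>R (A *v (A *v w s)) + (-1) *\<^sub>R (A *v w s)) + (((-s)^2/2) *\<^sub>R 0 + s *\<^sub>R (A *v (A *v w s))))) (at s)"
        by (intro has_vector_derivative_add dw d1 d2)
      then have "((\<lambda>s. w s + (-s) *\<^sub>R (A *v w s) + ((-s)^2/2) *\<^sub>R (A *v (A *v w s))) has_vector_derivative 0) (at s)"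
        by (simp add: algebra_simps)
      then show ?thesis unfolding g_def Ev_def by simp
    qed
    obtain c where c: "\<forall>x\<in>UNIV. g x = c"
      using has_derivative_zero_constant[of UNIV g] dg
      unfolding has_vector_derivative_def by (auto simp: has_derivative_at_withinI)
    then have "g t = g 0" by simp
    also have "g 0 = h \<xi>" by (simp add: g_def w_def Ev_0)
    finally have gt: "g t = h \<xi>" .
    have "h (Ev A t \<xi>) = Ev A t (g t)" unfolding g_def w_def by (simp add: Ev_inv'[OF A3])
    then show "h (Ev A t \<xi>) = Ev A t (h \<xi>)" using gt by simp
  qed
qed

definition Keq :: "real^'n^'n \<Rightarrow> nat \<Rightarrow> (real^'n \<Rightarrow> real^'n) set" where
  "Keq A d = {h \<in> Fhom d. \<forall>t \<xi>. h (Ev A t \<xi>) = Ev A t (h \<xi>)}"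

lemma ad_kernel_eq:
  assumes A3: "\<And>v. A *v (A *v (A *v v)) = 0"
  shows "ad_kernel A d = Keq A d"
  unfolding ad_kernel_def Keq_def using ad_zero_iff[OF A3] Fhom_differentiable by blast

lemma Keq_subspace: "FS.subspace (Keq A d)"
  unfolding FS.subspace_def Keq_def using Fhom_subspace[of d]
  by (auto simp: FS.subspace_def Ev_add Ev_scale Ev_zero fscale_apply)


lemma N2_2_ne: "(1::2) \<noteq> 2" by simp

lemma A2_apply: "transpose N2 *v \<xi> = (\<chi> i. if i = 2 then \<xi> $ 1 else 0)"
  by (simp add: vec_eq_iff matrix_vector_mult_def transpose_def N2_def sum_2 forall_2)

lemma A2_3: "transpose N2 *v (transpose N2 *v (transpose N2 *v v)) = 0"
  unfolding A2_apply by (simp add: vec_eq_iff forall_2)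

lemma Ev2: "Ev (transpose N2) t \<xi> = (\<chi> i. if i = 1 then \<xi> $ 1 else \<xi> $ 2 + t * \<xi> $ 1)"
  unfolding Ev_def A2_apply by (simp add: vec_eq_iff forall_2)

lemma dim2:
  assumes d: "d \<ge> 1"
  shows "vector_space.dim fscale (ad_kernel (transpose N2) d) = 2"
proof -
  obtain d' where d': "d = Suc d'" using d by (cases d) auto
  let ?A = "transpose N2"
  define b :: "2 \<Rightarrow> real^2 \<Rightarrow> real^2" where
    "b = (\<lambda>i \<xi>. if i = 1 then (\<chi> k. if k = 1 then \<xi>$1^d else \<xi>$1^d' * \<xi>$2)
                 else (\<chi> k. if k = 1 then 0 else \<xi>$1^d))"
  define L :: "(real^2 \<Rightarrow> real^2) \<Rightarrow> 2 \<Rightarrow> real" where "L = (\<lambda>h i. h (axis 1 1) $ i)"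
  have p1: "hom_poly d (\<lambda>x::real^2. x$1^d)"
    using hom_poly_power[OF hom_poly_coord, of d 1] by simp
  have p2: "hom_poly d (\<lambda>x::real^2. x$1^d' * x$2)"
    using hom_poly_mult[OF hom_poly_power[OF hom_poly_coord[of 1]] hom_poly_coord[of 2], of d'] d' by simp
  have "FS.dim (Keq ?A d) = card (UNIV :: 2 set)"
  proof (rule FS.dim_by_coords[OF Keq_subspace, where I=UNIV and b=b and L=L and c="\<lambda>_. 1"])
    show "finite (UNIV :: 2 set)" by simp
  next
    fix i :: 2
    have F: "b i \<in> Fhom d" unfolding Fhom_def
    proof (intro CollectI allI)
      fix k :: 2
      show "hom_poly d (\<lambda>x. b i x $ k)"
        using p1 p2 hom_poly_zero[of d] by (cases "i = 1"; cases "k = 1") (simp_all add: b_def)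
    qed
    have E: "b i (Ev ?A t \<xi>) = Ev ?A t (b i \<xi>)" for t \<xi>
      unfolding b_def Ev2 by (simp add: vec_eq_iff forall_2 d' algebra_simps)
    show "b i \<in> Keq ?A d" unfolding Keq_def using F E by blast
  next
    fix x y :: "real^2 \<Rightarrow> real^2" and i :: 2
    show "L (x + y) i = L x i + L y i" by (simp add: L_def)
  next
    fix x :: "real^2 \<Rightarrow> real^2" and r :: real and i :: 2
    show "L (fscale r x) i = r * L x i" by (simp add: L_def fscale_apply)
  next
    fix i j :: 2
    show "L (b j) i = (if i = j then 1 else 0)"
      using exhaust_2[of i] exhaust_2[of j]
      by (auto simp: L_def b_def axis_def d')
  next
    show "(1::real) \<noteq> 0" by simp
  next
    fix h assume hK: "h \<in> Keq ?A d" and L0: "\<forall>i\<in>UNIV. L h i = 0"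
    have hF: "h \<in> Fhom d" and hE: "\<And>t \<xi>. h (Ev ?A t \<xi>) = Ev ?A t (h \<xi>)"
      using hK unfolding Keq_def by auto
    have h1: "h (axis 1 1) = 0" using L0 by (simp add: L_def vec_eq_iff)
    have "h \<xi> = 0" if "\<xi> $ 1 \<noteq> 0" for \<xi>
    proof -
      have "\<xi> = Ev ?A (\<xi>$2 / \<xi>$1) ((\<xi> $ 1) *\<^sub>R axis 1 1)"
        unfolding Ev2 using that by (simp add: vec_eq_iff forall_2 axis_def)
      then have "h \<xi> = Ev ?A (\<xi>$2 / \<xi>$1) (h ((\<xi> $ 1) *\<^sub>R axis 1 1))" using hE by metis
      also have "\<dots> = 0" using Fhom_hom[OF hF] h1 by (simp add: Ev_zero)
      finally show ?thesis .
    qed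
    then have "h \<xi> = 0" for \<xi> using Fhom_vanish[OF hF, of 1] by blast
    then show "h = 0" by (simp add: fun_eq_iff)
  qed
  then show ?thesis using ad_kernel_eq[OF A2_3] by simp
qed


lemma poly_eq_on_pos:
  fixes p q :: "real poly"
  assumes "\<And>x. x > 0 \<Longrightarrow> poly p x = poly q x"
  shows "p = q"
proof (rule ccontr)
  assume "p \<noteq> q"
  then have "p - q \<noteq> 0" by simp
  then have "finite {x. poly (p - q) x = 0}" by (rule poly_roots_finite)
  moreover have "{0<..} \<subseteq> {x. poly (p - q) x = 0}" using assms by auto
  ultimately show False using infinite_Ioi[of "0::real"] finite_subset by blast
qed

lemma poly_sum_upto:
  fixes C :: "'a::comm_semiring_1 poly"
  assumes "degree C \<le> M"
  shows "poly C y = (\<Sum>i\<le>M. coeff C i * y ^ i)"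
proof -
  have "poly C y = (\<Sum>i\<le>degree C. coeff C i * y ^ i)" by (rule poly_altdef)
  also have "\<dots> = (\<Sum>i\<le>M. coeff C i * y ^ i)"
    using assms by (intro sum.mono_neutral_left) (auto simp: coeff_eq_0)
  finally show ?thesis .
qed

definition hh :: real where "hh = -1/2"

definition hatp :: "nat \<Rightarrow> real poly \<Rightarrow> real poly" where
  "hatp M C = (\<Sum>i\<le>M. monom (coeff C i * hh^i) (2*(M-i)))"

lemma hatp_eval:
  assumes "degree C \<le> M" "x \<noteq> 0"
  shows "x^(2*M) * poly C (-1/(2*x^2)) = poly (hatp M C) x"
proof -
  have t: "x^(2*M) * (coeff C i * (-1/(2*x^2))^i) = coeff C i * hh^i * x^(2*(M-i))" if "i \<le> M" for i
  proof -
    have e: "2*M = 2*(M-i) + 2*i" using that by simp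
    have "x^(2*M) = x^(2*(M-i)) * x^(2*i)" by (subst e) (simp only: power_add)
    moreover have "(-1/(2*x^2))^i = hh^i / x^(2*i)"
    proof -
      have "-1/(2*x^2) = hh * (1/x^2)" by (simp add: hh_def)
      then have "(-1/(2*x^2))^i = hh^i * (1/x^2)^i" by (simp only: power_mult_distrib)
      also have "(1/x^2)^i = 1 / x^(2*i)" by (simp add: power_one_over power_mult)
      finally show ?thesis by simp
    qed
    ultimately show ?thesis using assms(2) by (simp add: field_simps)
  qed
  have "x^(2*M) * poly C (-1/(2*x^2)) = (\<Sum>i\<le>M. x^(2*M) * (coeff C i * (-1/(2*x^2))^i))"
    using poly_sum_upto[OF assms(1)] by (simp add: sum_distrib_left)
  also have "\<dots> = (\<Sum>i\<le>M. coeff C i * hh^i * x^(2*(M-i)))"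
    using t by (intro sum.cong) auto
  also have "\<dots> = poly (hatp M C) x"
    by (simp add: hatp_def poly_sum poly_monom)
  finally show ?thesis .
qed

lemma coeff_hatp:
  "coeff (hatp M C) k = (if even k \<and> k \<le> 2*M then coeff C (M - k div 2) * hh^(M - k div 2) else 0)"
proof -
  have "coeff (hatp M C) k = (\<Sum>i\<le>M. if 2*(M-i) = k then coeff C i * hh^i else 0)"
    by (simp add: hatp_def coeff_sum coeff_monom)
  also have "\<dots> = (if even k \<and> k \<le> 2*M then coeff C (M - k div 2) * hh^(M - k div 2) else 0)"
  proof (cases "even k \<and> k \<le> 2*M")
    case True
    have "(\<Sum>i\<le>M. if 2*(M-i) = k then coeff C i * hh^i else 0)
        = (\<Sum>i\<le>M. if i = M - k div 2 then coeff C i * hh^i else 0)"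
      using True by (intro sum.cong refl) (auto elim!: evenE)
    also have "\<dots> = coeff C (M - k div 2) * hh^(M - k div 2)" by simp
    finally show ?thesis using True by simp
  next
    case False
    then have "(\<Sum>i\<le>M. if 2*(M-i) = k then coeff C i * hh^i else 0) = 0"
      by (intro sum.neutral) auto
    then show ?thesis by (simp only: if_not_P[OF False])
  qed
  finally show ?thesis .
qed

lemma deg_bound:
  fixes r A B :: "real poly" and d :: nat
  assumes d: "d \<ge> 1"
    and eq: "\<And>x. x > 0 \<Longrightarrow> poly r x = x^d * poly A (-1/(2*x^2)) + x^(d-1) * poly B (-1/(2*x^2))"
  shows "2 * degree A \<le> d \<and> 2 * degree B + 1 \<le> d"
proof -
  define M where "M = degree A + degree B"
  have dA: "degree A \<le> M" and dB: "degree B \<le> M" unfolding M_def by auto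
  define P where "P = monom 1 (2*M) * r"
  define Q where "Q = monom 1 d * hatp M A + monom 1 (d-1) * hatp M B"
  have PQ: "P = Q"
  proof (rule poly_eq_on_pos)
    fix x :: real assume x: "x > 0"
    have "poly P x = x^(2*M) * poly r x" by (simp add: P_def poly_monom)
    also have "\<dots> = x^d * (x^(2*M) * poly A (-1/(2*x^2))) + x^(d-1) * (x^(2*M) * poly B (-1/(2*x^2)))"
      using eq[OF x] by (simp add: algebra_simps)
    also have "\<dots> = poly Q x" using hatp_eval[OF dA] hatp_eval[OF dB] x by (simp add: Q_def poly_monom)
    finally show "poly P x = poly Q x" .
  qed
  have cP: "coeff P k = (if k < 2*M then 0 else coeff r (k - 2*M))" for k
    by (simp add: P_def coeff_monom_mult)
  have cQ: "coeff Q k = (if k < d then 0 else coeff (hatp M A) (k - d)) + (if k < d - 1 then 0 else coeff (hatp M B) (k - (d-1)))" for k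
    by (simp add: Q_def coeff_monom_mult)
  have hh0: "hh \<noteq> 0" by (simp add: hh_def)
  have A: "2 * degree A \<le> d"
  proof (cases "A = 0")
    case True then show ?thesis by simp
  next
    case False
    define a where "a = degree A"
    define k where "k = d + 2*(M-a)"
    have a: "a \<le> M" using dA a_def by simp
    have e1: "k - d = 2*(M-a)" "k - (d-1) = Suc (2*(M-a))" using d unfolding k_def by auto
    have c1: "coeff (hatp M A) (k - d) = coeff A a * hh^a"
      unfolding e1 coeff_hatp using a by simp
    have c2: "coeff (hatp M B) (k - (d-1)) = 0"
      unfolding e1 coeff_hatp by simp
    have "coeff Q k = coeff A a * hh^a" using cQ[of k] c1 c2 by (simp add: k_def)
    moreover have "coeff A a \<noteq> 0" using False a_def by simp
    ultimately have "coeff Q k \<noteq> 0" using hh0 by simp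
    then have "\<not> k < 2*M" using PQ cP by metis
    then show ?thesis using a unfolding k_def a_def by simp
  qed
  have B: "2 * degree B + 1 \<le> d"
  proof (cases "B = 0")
    case True then show ?thesis using d by simp
  next
    case False
    define b where "b = degree B"
    define k where "k = d - 1 + 2*(M-b)"
    have b: "b \<le> M" using dB b_def by simp
    have e1: "k - (d-1) = 2*(M-b)" using d unfolding k_def by auto
    have c1: "coeff (hatp M B) (k - (d-1)) = coeff B b * hh^b"
      unfolding e1 coeff_hatp using b by simp
    have c2: "(if k < d then 0 else coeff (hatp M A) (k - d)) = 0"
    proof (cases "k < d")
      case False
      then have "k - d = 2*(M-b) - 1" "M - b \<ge> 1" using d unfolding k_def by auto
      then have "odd (k - d)" by auto
      then show ?thesis using False by (simp add: coeff_hatp)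
    qed simp
    have "coeff Q k = coeff B b * hh^b" using cQ[of k] c1 c2 by (simp add: k_def)
    moreover have "coeff B b \<noteq> 0" using False b_def by simp
    ultimately have "coeff Q k \<noteq> 0" using hh0 by simp
    then have "\<not> k < 2*M" using PQ cP by metis
    then show ?thesis using b d unfolding k_def b_def by simp
  qed
  show ?thesis using A B by simp
qed


definition v3 :: "real \<Rightarrow> real \<Rightarrow> real \<Rightarrow> real^3" where
  "v3 a b c = (\<chi> i. if i = 1 then a else if i = 2 then b else c)"

lemma v3_nth [simp]: "v3 a b c $ 1 = a" "v3 a b c $ 2 = b" "v3 a b c $ 3 = c"
  by (simp_all add: v3_def)

lemma v3_eq: "x = v3 a b c \<longleftrightarrow> x $ 1 = a \<and> x $ 2 = b \<and> x $ 3 = c"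
  by (auto simp: vec_eq_iff forall_3)

lemma A3_apply: "transpose N3 *v \<xi> = v3 0 (\<xi> $ 1) (\<xi> $ 2)"
  by (simp add: v3_eq matrix_vector_mult_def transpose_def N3_def sum_3)

lemma A3_3: "transpose N3 *v (transpose N3 *v (transpose N3 *v v)) = 0"
  unfolding A3_apply by (simp add: vec_eq_iff forall_3)

lemma Ev3: "Ev (transpose N3) t \<xi> = v3 (\<xi>$1) (\<xi>$2 + t * \<xi>$1) (\<xi>$3 + t * \<xi>$2 + t^2/2 * \<xi>$1)"
  unfolding Ev_def A3_apply by (simp add: v3_eq)

definition qf :: "real^3 \<Rightarrow> real" where "qf \<xi> = \<xi>$2^2 - 2 * \<xi>$1 * \<xi>$3"

lemma qf_inv: "qf (Ev (transpose N3) t \<xi>) = qf \<xi>"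
  unfolding qf_def Ev3 by (simp add: algebra_simps power2_eq_square)

lemma x1_inv: "Ev (transpose N3) t \<xi> $ 1 = \<xi> $ 1"
  unfolding Ev3 by simp

lemma hom_qf: "hom_poly 2 qf"
proof -
  have a: "hom_poly 2 (\<lambda>x::real^3. x$2^2)" using hom_poly_power[OF hom_poly_coord, of 2 2] by simp
  have b: "hom_poly 2 (\<lambda>x::real^3. 2 * (x$1 * x$3))"
    using hom_poly_scale[OF hom_poly_mult[OF hom_poly_coord[of "1::3"] hom_poly_coord[of "3::3"]], of 2] by (simp add: numeral_2_eq_2)
  show ?thesis using hom_poly_diff[OF a b] unfolding qf_def by (simp add: mult.assoc)
qed

lemma hom_m: "hom_poly (e + 2*j) (\<lambda>x::real^3. x$1^e * qf x ^ j)"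
  using hom_poly_mult[OF hom_poly_power[OF hom_poly_coord[of "1::3"]] hom_poly_power[OF hom_qf], of e j]
  by (simp add: mult.commute)

definition Pj :: "(real^3 \<Rightarrow> real^3) \<Rightarrow> 3 \<Rightarrow> real poly" where
  "Pj h j = (SOME P. \<forall>s. h (v3 1 0 s) $ j = poly P s)"

lemma Pj_ex: "h \<in> Fhom d \<Longrightarrow> \<exists>P. \<forall>s. h (v3 1 0 s) $ j = poly P s"
proof -
  assume "h \<in> Fhom d"
  then have "hom_poly d (\<lambda>x. h x $ j)" unfolding Fhom_def by blast
  from hom_poly_line[OF this, of "v3 1 0 0" "v3 0 0 1"] obtain P
    where "\<forall>s. h (v3 1 0 0 + s *\<^sub>R v3 0 0 1) $ j = poly P s" by blast
  moreover have "v3 1 0 0 + s *\<^sub>R v3 0 0 1 = v3 1 0 s" for s by (simp add: v3_eq)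
  ultimately show ?thesis by auto
qed

lemma Pj_spec: "h \<in> Fhom d \<Longrightarrow> h (v3 1 0 s) $ j = poly (Pj h j) s"
  using someI_ex[OF Pj_ex[where h=h and d=d and j=j]] unfolding Pj_def by blast

lemma Pj_eq: "h \<in> Fhom d \<Longrightarrow> (\<And>s. h (v3 1 0 s) $ j = poly Q s) \<Longrightarrow> Pj h j = Q"
  using Pj_spec[where h=h and d=d and j=j] by (metis poly_eq_poly_eq_iff ext)

lemma Pj_add: "h \<in> Fhom d \<Longrightarrow> g \<in> Fhom d \<Longrightarrow> Pj (h + g) j = Pj h j + Pj g j"
  using Fhom_subspace[of d] Pj_spec[where h=h and d=d and j=j] Pj_spec[where h=g and d=d and j=j]
  by (intro Pj_eq[where d=d]) (auto simp: FS.subspace_def)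

lemma Pj_scale: "h \<in> Fhom d \<Longrightarrow> Pj (fscale r h) j = smult r (Pj h j)"
  using Fhom_subspace[of d] Pj_spec[where h=h and d=d and j=j]
  by (intro Pj_eq[where d=d]) (auto simp: FS.subspace_def fscale_apply)


definition b3 :: "nat \<Rightarrow> nat \<Rightarrow> nat \<Rightarrow> real^3 \<Rightarrow> real^3" where
  "b3 d k j \<xi> = (if k = 0 then (\<xi>$1^(d-1-2*j) * qf \<xi>^j) *\<^sub>R \<xi>
     else if k = 1 then (\<xi>$1^(d-1-2*j) * qf \<xi>^j) *\<^sub>R (transpose N3 *v \<xi>)
     else (\<xi>$1^(d-2*j) * qf \<xi>^j) *\<^sub>R axis 3 1)"

definition I3 :: "nat \<Rightarrow> (nat \<times> nat) set" where
  "I3 d = ({0,1} \<times> {..(d-1) div 2}) \<union> ({2} \<times> {..d div 2})"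

lemma axis3: "(axis 3 1 :: real^3) = v3 0 0 1"
  by (simp add: v3_eq axis_def)

lemma b3_Fhom:
  assumes d: "d \<ge> 1" and kj: "(k, j) \<in> I3 d"
  shows "b3 d k j \<in> Fhom d"
  unfolding Fhom_def
proof (intro CollectI allI)
  fix i :: 3
  show "hom_poly d (\<lambda>x. b3 d k j x $ i)"
  proof (cases "k = 0 \<or> k = 1")
    case True
    then have jd: "d - 1 - 2*j + 2*j + 1 = d" using kj d unfolding I3_def by auto
    have hm: "hom_poly (d - 1 - 2*j + 2*j) (\<lambda>x::real^3. x$1^(d-1-2*j) * qf x ^ j)" by (rule hom_m)
    have hc: "hom_poly d (\<lambda>x::real^3. x$1^(d-1-2*j) * qf x ^ j * x $ l)" for l
      using hom_poly_mult[OF hm hom_poly_coord[of l]] jd by simp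
    show ?thesis
    proof (cases "k = 0")
      case True then show ?thesis using hc by (simp add: b3_def)
    next
      case False
      with \<open>k = 0 \<or> k = 1\<close> have k1: "k = 1" by simp
      show ?thesis unfolding b3_def A3_apply using exhaust_3[of i] hc hom_poly_zero[of d]
        by (auto simp: k1)
    qed
  next
    case False
    then have k2: "k = 2" and jd: "d - 2*j + 2*j = d" using kj unfolding I3_def by auto
    have hm: "hom_poly d (\<lambda>x::real^3. x$1^(d-2*j) * qf x ^ j)"
      using hom_m[of "d - 2*j" j] jd by simp
    have "hom_poly d (\<lambda>x::real^3. axis 3 1 $ i * (x$1^(d-2*j) * qf x ^ j))"
      by (rule hom_poly_scale[OF hm])
    then show ?thesis by (simp add: b3_def k2 mult.commute)
  qed
qed

lemma b3_equiv: "b3 d k j (Ev (transpose N3) t \<xi>) = Ev (transpose N3) t (b3 d k j \<xi>)"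
proof -
  have e3: "Ev (transpose N3) t (axis 3 1) = axis 3 1"
    unfolding Ev3 axis3 by simp
  show ?thesis
    by (simp add: b3_def qf_inv x1_inv Ev_scale Ev_comm e3)
qed

lemma b3_Keq: "d \<ge> 1 \<Longrightarrow> (k, j) \<in> I3 d \<Longrightarrow> b3 d k j \<in> Keq (transpose N3) d"
  unfolding Keq_def using b3_Fhom b3_equiv by blast

definition Q3 :: "(real^3 \<Rightarrow> real^3) \<Rightarrow> nat \<Rightarrow> real poly" where
  "Q3 h k = (if k = 0 then Pj h 1 else if k = 1 then Pj h 2 else Pj h 3 - pCons 0 (Pj h 1))"

lemma b3_at: "b3 d k j (v3 1 0 s) = ((- (2 * s))^j) *\<^sub>R (if k = 0 then v3 1 0 s else if k = 1 then v3 0 1 0 else v3 0 0 1)"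
  unfolding b3_def A3_apply axis3 by (simp add: qf_def)

lemma Pj_b3:
  assumes d: "d \<ge> 1" and kj: "(k, j) \<in> I3 d"
  shows "Pj (b3 d k j) i = (if (k = 0 \<and> i = 1) \<or> (k = 1 \<and> i = 2) \<or> (k = 2 \<and> i = 3) then monom ((-2)^j) j
     else if k = 0 \<and> i = 3 then monom ((-2)^j) (Suc j) else 0)"
proof (rule Pj_eq[OF b3_Fhom[OF d kj]])
  fix s :: real
  have k: "k = 0 \<or> k = 1 \<or> k = 2" using kj unfolding I3_def by auto
  have pw: "(- (2 * s))^j = (-2)^j * s^j" by (metis mult_minus_left power_mult_distrib)
  show "b3 d k j (v3 1 0 s) $ i = poly (if (k = 0 \<and> i = 1) \<or> (k = 1 \<and> i = 2) \<or> (k = 2 \<and> i = 3) then monom ((-2)^j) j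
     else if k = 0 \<and> i = 3 then monom ((-2)^j) (Suc j) else 0) s"
    unfolding b3_at using k exhaust_3[of i]
    by (auto simp: poly_monom pw)
qed

lemma Q3_b3:
  assumes d: "d \<ge> 1" and kj: "(k', j) \<in> I3 d" and k: "k \<le> 2"
  shows "Q3 (b3 d k' j) k = (if k = k' then monom ((-2)^j) j else 0)"
proof -
  have k': "k' = 0 \<or> k' = 1 \<or> k' = 2" using kj unfolding I3_def by auto
  have kk: "k = 0 \<or> k = 1 \<or> k = 2" using k by auto
  show ?thesis unfolding Q3_def Pj_b3[OF d kj] using k' kk
    by (auto simp: monom_Suc)
qed

definition L3 :: "(real^3 \<Rightarrow> real^3) \<Rightarrow> nat \<times> nat \<Rightarrow> real" where
  "L3 h ki = coeff (Q3 h (fst ki)) (snd ki)"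

lemma L3_b3:
  assumes d: "d \<ge> 1" and kj: "kj \<in> I3 d" and ki: "ki \<in> I3 d"
  shows "L3 (b3 d (fst kj) (snd kj)) ki = (if ki = kj then (-2)^(snd ki) else 0)"
proof -
  have "fst ki \<le> 2" using ki unfolding I3_def by auto
  then show ?thesis using Q3_b3[OF d _ \<open>fst ki \<le> 2\<close>, of "fst kj" "snd kj"] kj
    by (cases ki; cases kj) (auto simp: L3_def coeff_monom)
qed

lemma Q3_add: "h \<in> Fhom d \<Longrightarrow> g \<in> Fhom d \<Longrightarrow> Q3 (h + g) k = Q3 h k + Q3 g k"
  by (simp add: Q3_def Pj_add)

lemma Q3_scale: "h \<in> Fhom d \<Longrightarrow> Q3 (fscale r h) k = smult r (Q3 h k)"
  by (simp add: Q3_def Pj_scale smult_diff_right)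


lemma slice_decomp:
  assumes "c \<noteq> 0"
  shows "v3 c b e = Ev (transpose N3) (b / c) (c *\<^sub>R v3 1 0 ((e - b^2/(2*c)) / c))"
  unfolding Ev3 using assms by (simp add: v3_eq field_simps power2_eq_square)

lemma inj3:
  assumes d: "d \<ge> 1" and hK: "h \<in> Keq (transpose N3) d" and L0: "\<forall>ki\<in>I3 d. L3 h ki = 0"
  shows "h = 0"
proof -
  let ?A = "transpose N3"
  have hF: "h \<in> Fhom d" and hE: "\<And>t \<xi>. h (Ev ?A t \<xi>) = Ev ?A t (h \<xi>)"
    using hK unfolding Keq_def by auto
  define P1 where "P1 = Pj h 1"
  define P2 where "P2 = Pj h 2"
  define P3 where "P3 = Pj h 3"
  have P: "h (v3 1 0 s) $ 1 = poly P1 s" "h (v3 1 0 s) $ 2 = poly P2 s" "h (v3 1 0 s) $ 3 = poly P3 s" for s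
    unfolding P1_def P2_def P3_def using Pj_spec[OF hF] by auto
  have line: "\<exists>r. \<forall>x. h (v3 x 1 0) $ j = poly r x" for j
  proof -
    have "hom_poly d (\<lambda>x. h x $ j)" using hF unfolding Fhom_def by blast
    from hom_poly_line[OF this, of "v3 0 1 0" "v3 1 0 0"] obtain r
      where "\<forall>x. h (v3 0 1 0 + x *\<^sub>R v3 1 0 0) $ j = poly r x" by blast
    moreover have "v3 0 1 0 + x *\<^sub>R v3 1 0 0 = v3 x 1 0" for x by (simp add: v3_eq)
    ultimately show ?thesis by auto
  qed
  obtain r2 where r2: "\<And>x. h (v3 x 1 0) $ 2 = poly r2 x" using line[of 2] by blast
  obtain r3 where r3: "\<And>x. h (v3 x 1 0) $ 3 = poly r3 x" using line[of 3] by blast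
  have rel: "h (v3 x 1 0) = Ev ?A (1/x) (x^d *\<^sub>R h (v3 1 0 (-1/(2*x^2))))" if x: "x > 0" for x
  proof -
    have "v3 x 1 0 = Ev ?A (1/x) (x *\<^sub>R v3 1 0 (-1/(2*x^2)))"
      using slice_decomp[of x 1 0] x by (simp add: field_simps power2_eq_square)
    then show ?thesis using hE Fhom_hom[OF hF] by metis
  qed
  have eq2: "poly r2 x = x^d * poly P2 (-1/(2*x^2)) + x^(d-1) * poly P1 (-1/(2*x^2))" if x: "x > 0" for x
  proof -
    have "poly r2 x = x^d * poly P2 (-1/(2*x^2)) + (1/x) * (x^d * poly P1 (-1/(2*x^2)))"
      using r2[of x] rel[OF x] P by (simp add: Ev3)
    moreover have "(1/x) * x^d = x^(d-1)" using x d by (simp add: field_simps power_eq_if)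
    ultimately show ?thesis by (metis mult.assoc)
  qed
  have eq3: "poly r3 x = x^d * poly (P3 - pCons 0 P1) (-1/(2*x^2)) + x^(d-1) * poly P2 (-1/(2*x^2))" if x: "x > 0" for x
  proof -
    define \<sigma> where "\<sigma> = -1/(2*x^2)"
    have f1: "poly r3 x = x^d * poly P3 \<sigma> + (1/x) * (x^d * poly P2 \<sigma>) + (1/x)^2/2 * (x^d * poly P1 \<sigma>)"
      using r3[of x] rel[OF x] P unfolding \<sigma>_def by (simp add: Ev3)
    have "(1/x) * x^d = x^(d-1)" using x d by (simp add: field_simps power_eq_if)
    then have f2: "(1/x) * (x^d * poly P2 \<sigma>) = x^(d-1) * poly P2 \<sigma>" by (metis mult.assoc)
    have f3: "(1/x)^2/2 * (x^d * poly P1 \<sigma>) = - (x^d * (\<sigma> * poly P1 \<sigma>))"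
      using x unfolding \<sigma>_def by (simp add: field_simps power2_eq_square)
    show ?thesis unfolding \<sigma>_def[symmetric] f1 f2 f3 by (simp add: algebra_simps)
  qed
  have b2: "2 * degree P1 + 1 \<le> d" using deg_bound[OF d eq2] by simp
  have b3: "2 * degree (P3 - pCons 0 P1) \<le> d" "2 * degree P2 + 1 \<le> d" using deg_bound[OF d eq3] by simp_all
  have Qz: "Q3 h k = 0" if k: "k \<le> 2" for k
  proof -
    define B where "B = (if k \<le> 1 then (d-1) div 2 else d div 2)"
    have I: "(k, i) \<in> I3 d" if "i \<le> B" for i
    proof (cases "k \<le> 1")
      case True then show ?thesis using that unfolding B_def I3_def by auto
    next
      case False then have "k = 2" using k by simp
      then show ?thesis using that unfolding B_def I3_def by auto
    qed
    have deg: "degree (Q3 h k) \<le> B"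
      using k b2 b3 unfolding B_def Q3_def P1_def P2_def P3_def by auto
    have "coeff (Q3 h k) i = 0" for i
    proof (cases "i \<le> B")
      case True then show ?thesis using bspec[OF L0 I[OF True]] by (simp add: L3_def)
    next
      case False then show ?thesis using deg by (intro coeff_eq_0) simp
    qed
    then show ?thesis by (simp add: poly_eq_iff)
  qed
  have "P1 = 0" using Qz[of 0] by (simp add: Q3_def P1_def)
  moreover have "P2 = 0" using Qz[of 1] by (simp add: Q3_def P2_def)
  moreover have "P3 - pCons 0 P1 = 0" using Qz[of 2] by (simp add: Q3_def P1_def P3_def)
  ultimately have P0: "P1 = 0" "P2 = 0" "P3 = 0" by simp_all
  have slice0: "h (v3 1 0 s) = 0" for s
    using P[of s] P0 by (simp add: vec_eq_iff forall_3)
  have "h \<xi> = 0" if "\<xi> $ 1 \<noteq> 0" for \<xi>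
  proof -
    have "\<xi> = v3 (\<xi>$1) (\<xi>$2) (\<xi>$3)" by (simp add: v3_eq)
    also have "\<dots> = Ev ?A (\<xi>$2 / \<xi>$1) (\<xi>$1 *\<^sub>R v3 1 0 ((\<xi>$3 - (\<xi>$2)^2/(2*\<xi>$1)) / \<xi>$1))"
      by (rule slice_decomp[OF that])
    finally have "h \<xi> = Ev ?A (\<xi>$2 / \<xi>$1) ((\<xi>$1)^d *\<^sub>R h (v3 1 0 ((\<xi>$3 - (\<xi>$2)^2/(2*\<xi>$1)) / \<xi>$1)))"
      using hE Fhom_hom[OF hF] by metis
    then show ?thesis by (simp add: slice0 Ev_zero)
  qed
  then have "h \<xi> = 0" for \<xi> using Fhom_vanish[OF hF, of 1] by blast
  then show "h = 0" by (simp add: fun_eq_iff)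
qed


lemma card_I3: "card (I3 d) = 2 * ((d - 1) div 2 + 1) + (d div 2 + 1)"
proof -
  have "card (I3 d) = card ({0,1::nat} \<times> {..(d-1) div 2}) + card ({2::nat} \<times> {..d div 2})"
    unfolding I3_def by (rule card_Un_disjoint) auto
  then show ?thesis by (simp add: card_cartesian_product)
qed

lemma ceil_count:
  assumes "d \<ge> 1"
  shows "int (2 * ((d - 1) div 2 + 1) + (d div 2 + 1)) = \<lceil>3 * real d / 2 + 1\<rceil>"
proof (cases "even d")
  case True
  then obtain k where k: "d = 2 * k" by blast
  with assms have "k \<ge> 1" by simp
  then have "(d - 1) div 2 = k - 1" "d div 2 = k" using k by auto
  moreover have "3 * real d / 2 + 1 = real_of_int (int (3 * k + 1))" using k by simp
  ultimately show ?thesis using \<open>k \<ge> 1\<close>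
    by (simp only: ceiling_of_int) (simp add: algebra_simps)
next
  case False
  then obtain k where k: "d = 2 * k + 1" using oddE by blast
  then have e: "(d - 1) div 2 = k" "d div 2 = k" by auto
  have "\<lceil>3 * real d / 2 + 1\<rceil> = int (3 * k + 3)"
    by (rule ceiling_unique) (simp_all add: k)
  then show ?thesis unfolding e by simp
qed

lemma dim3:
  assumes d: "d \<ge> 1"
  shows "vector_space.dim fscale (ad_kernel (transpose N3) d) = card (I3 d)"
proof -
  have "FS.dim (Keq (transpose N3) d) = card (I3 d)"
  proof (rule FS.dim_by_coords[OF Keq_subspace, where I = "I3 d" and b = "\<lambda>kj. b3 d (fst kj) (snd kj)"
        and L = L3 and c = "\<lambda>ki. (-2)^(snd ki)"])
    show "finite (I3 d)" unfolding I3_def by simp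
  next
    fix i assume "i \<in> I3 d"
    then show "b3 d (fst i) (snd i) \<in> Keq (transpose N3) d" using b3_Keq[OF d, of "fst i" "snd i"] by simp
  next
    fix x y i assume "x \<in> Keq (transpose N3) d" "y \<in> Keq (transpose N3) d"
    then show "L3 (x + y) i = L3 x i + L3 y i"
      unfolding Keq_def by (auto simp: L3_def Q3_add)
  next
    fix x r i assume "x \<in> Keq (transpose N3) d"
    then show "L3 (fscale r x) i = r * L3 x i"
      unfolding Keq_def by (auto simp: L3_def Q3_scale)
  next
    fix i j assume "i \<in> I3 d" "j \<in> I3 d"
    then show "L3 (b3 d (fst j) (snd j)) i = (if i = j then (-2)^(snd i) else 0)"
      using L3_b3[OF d \<open>j \<in> I3 d\<close> \<open>i \<in> I3 d\<close>] by simp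
  next
    fix i show "(-2::real)^(snd i) \<noteq> 0" by simp
  next
    fix x assume "x \<in> Keq (transpose N3) d" "\<forall>i\<in>I3 d. L3 x i = 0"
    then show "x = 0" by (rule inj3[OF d])
  qed
  then show ?thesis using ad_kernel_eq[OF A3_3] by simp
qed

theorem lemma5:
  fixes d :: nat
  assumes "d \<ge> 1"
  shows "vector_space.dim fscale (ad_kernel (transpose N2) d) = 2
       \<and> int (vector_space.dim fscale (ad_kernel (transpose N3) d)) = \<lceil>3 * real d / 2 + 1\<rceil>"
  using dim2[OF assms] dim3[OF assms] card_I3[of d] ceil_count[OF assms] by simp


end
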